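(* For all integers $d\geq 2$ and $\Delta\geq 2$, there exists a connected bipartite graph $G$ with $\mathrm{diam}(G)=d$ and $\Delta(G)=\Delta$ such that $G$ admits an interval edge coloring (i.e. $G\in\mathfrak{N}$) and $W(G)=d(\Delta-1)+1$.
   Context: All graphs are finite, undirected, without loops or multiple edges. $\Delta(G)$ denotes the maximum degree of $G$ and $\mathrm{diam}(G)$ its diameter. For a positive integer $t$, an interval $t$-coloring of a graph $G$ is a map assigning to each edge of $G$ a color from $\{1,2,\ldots,t\}$ such that every color $i\in\{1,\ldots,t\}$ is used on at least one edge, edges sharing a vertex receive distinct colors, and for each vertex $v$ the set of colors of edges incident to $v$ is an interval of consecutive integers. $\mathfrak{N}$ denotes the set of graphs that admit an interval $t$-coloring for some $t$, and for $G\in\mathfrak{N}$, $W(G)$ denotes the greatest $t$ for which $G$ has an interval $t$-coloring. *)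

theory Defs
  imports Main
begin

definition simple_graph :: "'a set \<Rightarrow> 'a set set \<Rightarrow> bool" where
  "simple_graph V E \<longleftrightarrow> finite V \<and>
     (\<forall>e\<in>E. \<exists>u v. e = {u, v} \<and> u \<noteq> v \<and> u \<in> V \<and> v \<in> V)"

definition degree :: "'a set set \<Rightarrow> 'a \<Rightarrow> nat" where
  "degree E v = card {e\<in>E. v \<in> e}"

definition max_degree :: "'a set \<Rightarrow> 'a set set \<Rightarrow> nat" where
  "max_degree V E = Max (degree E ` V)"

text \<open>A walk of length (length xs - 1) given as the vertex list xs.\<close>
definition is_walk :: "'a set \<Rightarrow> 'a set set \<Rightarrow> 'a list \<Rightarrow> bool" where
  "is_walk V E xs \<longleftrightarrow> xs \<noteq> [] \<and> set xs \<subseteq> V \<and>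
     (\<forall>i. Suc i < length xs \<longrightarrow> {xs ! i, xs ! Suc i} \<in> E)"

definition connected_graph :: "'a set \<Rightarrow> 'a set set \<Rightarrow> bool" where
  "connected_graph V E \<longleftrightarrow> V \<noteq> {} \<and>
     (\<forall>u\<in>V. \<forall>v\<in>V. \<exists>xs. is_walk V E xs \<and> hd xs = u \<and> last xs = v)"

definition graph_dist :: "'a set \<Rightarrow> 'a set set \<Rightarrow> 'a \<Rightarrow> 'a \<Rightarrow> nat" where
  "graph_dist V E u v = (LEAST n. \<exists>xs. is_walk V E xs \<and> hd xs = u \<and> last xs = v
                                    \<and> length xs = Suc n)"

definition diam :: "'a set \<Rightarrow> 'a set set \<Rightarrow> nat" where
  "diam V E = Max {graph_dist V E u v | u v. u \<in> V \<and> v \<in> V}"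

definition bipartite :: "'a set \<Rightarrow> 'a set set \<Rightarrow> bool" where
  "bipartite V E \<longleftrightarrow> (\<exists>A B. A \<union> B = V \<and> A \<inter> B = {} \<and>
     (\<forall>e\<in>E. \<exists>a\<in>A. \<exists>b\<in>B. e = {a, b}))"

definition interval_coloring :: "'a set \<Rightarrow> 'a set set \<Rightarrow> nat \<Rightarrow> ('a set \<Rightarrow> nat) \<Rightarrow> bool" where
  "interval_coloring V E t c \<longleftrightarrow>
     (\<forall>e\<in>E. c e \<in> {1..t}) \<and>
     (\<forall>i\<in>{1..t}. \<exists>e\<in>E. c e = i) \<and>
     (\<forall>e\<in>E. \<forall>e'\<in>E. e \<noteq> e' \<and> e \<inter> e' \<noteq> {} \<longrightarrow> c e \<noteq> c e') \<and>
     (\<forall>v\<in>V. \<forall>i j k. i \<le> j \<and> j \<le> k \<and> i \<in> c ` {e\<in>E. v \<in> e}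
            \<and> k \<in> c ` {e\<in>E. v \<in> e} \<longrightarrow> j \<in> c ` {e\<in>E. v \<in> e})"

definition has_interval_coloring :: "'a set \<Rightarrow> 'a set set \<Rightarrow> nat \<Rightarrow> bool" where
  "has_interval_coloring V E t \<longleftrightarrow> t \<ge> 1 \<and> (\<exists>c. interval_coloring V E t c)"

definition interval_colorable :: "'a set \<Rightarrow> 'a set set \<Rightarrow> bool" where
  "interval_colorable V E \<longleftrightarrow> (\<exists>t. has_interval_coloring V E t)"

definition W :: "'a set \<Rightarrow> 'a set set \<Rightarrow> nat" where
  "W V E = (GREATEST t. has_interval_coloring V E t)"

end

theory Submission
  imports Defs
begin

definition adjK :: "nat \<Rightarrow> nat \<Rightarrow> nat \<Rightarrow> nat \<Rightarrow> bool" where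
"adjK N K x y \<longleftrightarrow> 1 \<le> x \<and> 1 \<le> y \<and> x \<le> N \<and> y \<le> N \<and> x \<le> y + K \<and> y \<le> x + K \<and>
   (x + y \<le> K + 2 \<or> 2*N \<le> x + y + K \<or> even (x + y + K))"

lemma adjK_comp:
  assumes k: "k \<ge> 1" and a: "adjK N (K+k) x z"
  shows "\<exists>y. adjK N K x y \<and> adjK N k y z"
proof -
  from a have b: "1 \<le> x" "1 \<le> z" "x \<le> N" "z \<le> N" "x \<le> z + (K+k)" "z \<le> x + (K+k)"
    and c: "x + z \<le> K + k + 2 \<or> 2*N \<le> x + z + K + k \<or> even (x + z + K + k)"
    by (auto simp: adjK_def add.assoc)
  show ?thesis
  proof (cases "x + z \<le> K + k + 2")
    case True
    show ?thesis
    proof (cases "z \<le> k+1 \<and> x \<le> K+1")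
      case True2: True
      show ?thesis by (rule exI[of _ 1]) (use b True True2 in \<open>auto simp: adjK_def\<close>)
    next
      case False2: False
      show ?thesis
      proof (cases "z > k+1")
        case True3: True
        show ?thesis by (rule exI[of _ "z-k"]) (use b True True3 in \<open>auto simp: adjK_def\<close>)
      next
        case False3: False
        show ?thesis by (rule exI[of _ "x-K"]) (use b True False2 False3 in \<open>auto simp: adjK_def\<close>)
      qed
    qed
  next
    case nb: False
    show ?thesis
    proof (cases "2*N \<le> x + z + K + k")
      case True
      show ?thesis
      proof (cases "z + k \<ge> N \<and> x + K \<ge> N")
        case True2: True
        show ?thesis by (rule exI[of _ N]) (use b True True2 in \<open>auto simp: adjK_def\<close>)
      next
        case False2: False
        show ?thesis
        proof (cases "z + k < N")
          case True3: True
          show ?thesis by (rule exI[of _ "z+k"]) (use b True True3 in \<open>auto simp: adjK_def\<close>)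
        next
          case False3: False
          show ?thesis by (rule exI[of _ "x+K"]) (use b True False2 False3 in \<open>auto simp: adjK_def\<close>)
        qed
      qed
    next
      case nt: False
      with nb c have ev: "even (x + z + K + k)" by auto
      show ?thesis
      proof (cases "z \<ge> x + k")
        case True
        show ?thesis by (rule exI[of _ "z-k"]) (use b ev True k in \<open>auto simp: adjK_def\<close>)
      next
        case F1: False
        show ?thesis
        proof (cases "x \<ge> z + k")
          case True
          show ?thesis by (rule exI[of _ "z+k"]) (use b ev True k in \<open>auto simp: adjK_def\<close>)
        next
          case F2: False
          show ?thesis
          proof (cases "even (x + z + k)")
            case True
            then have "even K" using ev by presburger
            show ?thesis by (rule exI[of _ x]) (use b ev True F1 F2 \<open>even K\<close> in \<open>auto simp: adjK_def\<close>)
          next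
            case F3: False
            then have oK: "odd K" using ev by presburger
            have N2: "2 \<le> N" using nb b k by linarith
            have K1: "1 \<le> K" using oK by (cases K) auto
            consider "x < z" | "z < x" | "x = z" "x < N" | "x = z" "x = N" using b by linarith
            then show ?thesis
            proof cases
              case 1 show ?thesis by (rule exI[of _ "x+1"]) (use b oK K1 F3 N2 k F1 F2 1 in \<open>auto simp: adjK_def\<close>)
            next
              case 2 show ?thesis by (rule exI[of _ "x-1"]) (use b oK K1 F3 N2 k F1 F2 2 in \<open>auto simp: adjK_def\<close>)
            next
              case 3 show ?thesis by (rule exI[of _ "x+1"]) (use b oK K1 F3 N2 k F1 F2 3 in \<open>auto simp: adjK_def\<close>)
            next
              case 4 show ?thesis by (rule exI[of _ "x-1"]) (use b oK K1 F3 N2 k F1 F2 4 in \<open>auto simp: adjK_def\<close>)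
            qed
          qed
        qed
      qed
    qed
  qed
qed

definition sg :: "nat \<Rightarrow> nat \<Rightarrow> nat \<Rightarrow> nat" where
  "sg k N c = max 1 (c - k) + min N c"

definition Eg :: "nat \<Rightarrow> nat \<Rightarrow> nat set set" where
  "Eg k N = {{2*s, 2*(sg k N c - s)+1} | c s. 1 \<le> c \<and> c \<le> N + k \<and> max 1 (c-k) \<le> s \<and> s \<le> min N c}"

definition Vg :: "nat \<Rightarrow> nat set" where
  "Vg N = {2..2*N+1}"

definition colg :: "nat \<Rightarrow> nat \<Rightarrow> nat set \<Rightarrow> nat" where
  "colg k N e = (THE c. 1 \<le> c \<and> c \<le> N + k \<and>
      (\<exists>s. max 1 (c-k) \<le> s \<and> s \<le> min N c \<and> e = {2*s, 2*(sg k N c - s)+1}))"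

definition inc :: "nat \<Rightarrow> nat \<Rightarrow> nat \<Rightarrow> nat \<Rightarrow> nat set" where
  "inc k N v c = (if even v then {v, 2*(sg k N c - v div 2)+1} else {2*(sg k N c - v div 2), v})"

lemma sg_Suc: "k + 1 \<le> N \<Longrightarrow> sg k N c < sg k N (Suc c)"
  unfolding sg_def by (auto simp: max_def min_def)

lemma sg_inj: assumes "k + 1 \<le> N" "sg k N c = sg k N c'" shows "c = c'"
proof -
  have "strict_mono (sg k N)" using sg_Suc[OF assms(1)] by (simp add: strict_mono_Suc_iff)
  then show ?thesis using assms(2) by (simp add: strict_mono_eq)
qed

lemma pair_eq: "({2*a, 2*b+1} = {2*a', 2*(b'::nat)+1}) \<longleftrightarrow> a = a' \<and> b = b'"
  by (auto simp: doubleton_eq_iff) presburger+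

lemma refl_win:
  assumes "max 1 (c-k) \<le> s" "s \<le> min N c"
  shows "max 1 (c-k) \<le> sg k N c - s \<and> sg k N c - s \<le> min N c \<and> sg k N c - (sg k N c - s) = s \<and> s \<le> sg k N c"
  using assms unfolding sg_def by (auto simp: max_def min_def)

lemma win:
  fixes x N c k :: nat
  assumes "1 \<le> x" "x \<le> N"
  shows "(1 \<le> c \<and> c \<le> N + k \<and> max 1 (c-k) \<le> x \<and> x \<le> min N c) \<longleftrightarrow> (x \<le> c \<and> c \<le> x + k)"
  using assms by (simp add: max_def min_def) arith

lemma colg_edge:
  assumes N: "k + 1 \<le> N" and c: "1 \<le> c" "c \<le> N + k" and s: "max 1 (c-k) \<le> s" "s \<le> min N c"
  shows "colg k N {2*s, 2*(sg k N c - s)+1} = c"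
  unfolding colg_def
proof (rule the_equality)
  show "1 \<le> c \<and> c \<le> N + k \<and> (\<exists>s'. max 1 (c-k) \<le> s' \<and> s' \<le> min N c \<and> {2*s, 2*(sg k N c - s)+1} = {2*s', 2*(sg k N c - s')+1})"
    using c s by blast
next
  fix c' assume "1 \<le> c' \<and> c' \<le> N + k \<and> (\<exists>s'. max 1 (c'-k) \<le> s' \<and> s' \<le> min N c' \<and> {2*s, 2*(sg k N c - s)+1} = {2*s', 2*(sg k N c' - s')+1})"
  then obtain s' where s': "max 1 (c'-k) \<le> s'" "s' \<le> min N c'" and e: "{2*s, 2*(sg k N c - s)+1} = {2*s', 2*(sg k N c' - s')+1}"
    by blast
  from pair_eq[THEN iffD1, OF e] have "s = s'" "sg k N c - s = sg k N c' - s'" by auto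
  moreover have "s \<le> sg k N c" using refl_win[OF s] by blast
  moreover have "s' \<le> sg k N c'" using refl_win[OF s'] by blast
  ultimately have "sg k N c = sg k N c'" by auto
  then show "c' = c" using sg_inj[OF N] by metis
qed

lemma inc_in:
  assumes N: "k + 1 \<le> N" and v: "v \<in> Vg N" and c: "v div 2 \<le> c" "c \<le> v div 2 + k"
  shows "inc k N v c \<in> Eg k N \<and> v \<in> inc k N v c \<and> colg k N (inc k N v c) = c"
proof -
  define x where "x = v div 2"
  have x: "1 \<le> x" "x \<le> N" using v unfolding Vg_def x_def by auto
  show ?thesis
  proof (cases "even v")
    case True
    then have vx: "v = 2*x" unfolding x_def by simp
    have w: "1 \<le> c \<and> c \<le> N + k \<and> max 1 (c-k) \<le> x \<and> x \<le> min N c"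
      using win[OF x] c unfolding x_def by blast
    have ie: "inc k N v c = {2*x, 2*(sg k N c - x)+1}" unfolding inc_def using True vx by simp
    have "inc k N v c \<in> Eg k N" unfolding ie Eg_def using w by blast
    moreover have "colg k N (inc k N v c) = c" unfolding ie using colg_edge[OF N] w by blast
    ultimately show ?thesis unfolding ie using vx by simp
  next
    case False
    then have vx: "v = 2*x+1" unfolding x_def by simp
    have w: "1 \<le> c \<and> c \<le> N + k \<and> max 1 (c-k) \<le> x \<and> x \<le> min N c"
      using win[OF x] c unfolding x_def by blast
    define s where "s = sg k N c - x"
    have r: "max 1 (c-k) \<le> s \<and> s \<le> min N c \<and> sg k N c - s = x"
      using refl_win[of c k x N] w unfolding s_def by blast
    have ie: "inc k N v c = {2*s, 2*(sg k N c - s)+1}" unfolding inc_def using False vx r s_def by simp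
    have "inc k N v c \<in> Eg k N" unfolding ie Eg_def using w r by blast
    moreover have "colg k N (inc k N v c) = c" unfolding ie using colg_edge[OF N] w r by blast
    ultimately show ?thesis unfolding ie using vx r by simp
  qed
qed

lemma inc_all:
  assumes e: "e \<in> Eg k N" and v: "v \<in> e"
  shows "v \<in> Vg N \<and> (\<exists>c. v div 2 \<le> c \<and> c \<le> v div 2 + k \<and> e = inc k N v c)"
proof -
  obtain c s where e': "e = {2*s, 2*(sg k N c - s)+1}" and w: "1 \<le> c" "c \<le> N + k" "max 1 (c-k) \<le> s" "s \<le> min N c"
    using e unfolding Eg_def by blast
  have r: "max 1 (c-k) \<le> sg k N c - s \<and> sg k N c - s \<le> min N c \<and> sg k N c - (sg k N c - s) = s"
    using refl_win[OF w(3,4)] by blast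
  from v e' have "v = 2*s \<or> v = 2*(sg k N c - s)+1" by auto
  then show ?thesis
  proof
    assume vs: "v = 2*s"
    have s: "1 \<le> s" "s \<le> N" using w by auto
    have "s \<le> c \<and> c \<le> s + k" using win[OF s, of c k] w by blast
    moreover have "e = inc k N v c" unfolding inc_def e' using vs by simp
    ultimately show ?thesis using vs s unfolding Vg_def by auto
  next
    assume vy: "v = 2*(sg k N c - s)+1"
    define y where "y = sg k N c - s"
    have y: "1 \<le> y" "y \<le> N" using r unfolding y_def by auto
    have "y \<le> c \<and> c \<le> y + k" using win[OF y, of c k] w r unfolding y_def by blast
    moreover have "e = inc k N v c" unfolding inc_def e' using vy r unfolding y_def by simp
    ultimately show ?thesis using vy y unfolding Vg_def y_def by auto
  qed
qed

lemma inc_set: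
  assumes N: "k + 1 \<le> N" and v: "v \<in> Vg N"
  shows "{e \<in> Eg k N. v \<in> e} = inc k N v ` {v div 2..v div 2 + k}"
proof (rule set_eqI, rule iffI)
  fix e assume "e \<in> {e \<in> Eg k N. v \<in> e}"
  then have "e \<in> Eg k N" "v \<in> e" by auto
  from inc_all[OF this] obtain c where "v div 2 \<le> c" "c \<le> v div 2 + k" "e = inc k N v c" by blast
  then show "e \<in> inc k N v ` {v div 2..v div 2 + k}" by auto
next
  fix e assume "e \<in> inc k N v ` {v div 2..v div 2 + k}"
  then obtain c where "v div 2 \<le> c" "c \<le> v div 2 + k" "e = inc k N v c" by auto
  with inc_in[OF N v, of c] show "e \<in> {e \<in> Eg k N. v \<in> e}" by simp
qed

lemma inc_inj:
  assumes N: "k + 1 \<le> N" and v: "v \<in> Vg N"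
  shows "inj_on (inc k N v) {v div 2..v div 2 + k}"
proof (rule inj_onI)
  fix a b assume a: "a \<in> {v div 2..v div 2 + k}" and b: "b \<in> {v div 2..v div 2 + k}" and e: "inc k N v a = inc k N v b"
  from a have a': "v div 2 \<le> a" "a \<le> v div 2 + k" by auto
  from b have b': "v div 2 \<le> b" "b \<le> v div 2 + k" by auto
  have "colg k N (inc k N v a) = a" using inc_in[OF N v a'] by (elim conjE)
  moreover have "colg k N (inc k N v b) = b" using inc_in[OF N v b'] by (elim conjE)
  ultimately show "a = b" using e by metis
qed

lemma col_set:
  assumes N: "k + 1 \<le> N" and v: "v \<in> Vg N"
  shows "colg k N ` {e \<in> Eg k N. v \<in> e} = {v div 2..v div 2 + k}"
proof (rule set_eqI, rule iffI)
  fix i assume "i \<in> colg k N ` {e \<in> Eg k N. v \<in> e}"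
  then obtain c where "v div 2 \<le> c" "c \<le> v div 2 + k" "i = colg k N (inc k N v c)"
    unfolding inc_set[OF N v] by auto
  with inc_in[OF N v, of c] show "i \<in> {v div 2..v div 2 + k}" by simp
next
  fix i assume i: "i \<in> {v div 2..v div 2 + k}"
  then have "inc k N v i \<in> {e \<in> Eg k N. v \<in> e}" "colg k N (inc k N v i) = i"
    using inc_in[OF N v, of i] by auto
  then show "i \<in> colg k N ` {e \<in> Eg k N. v \<in> e}" by (metis image_eqI)
qed

lemma deg_eq:
  assumes N: "k + 1 \<le> N" and v: "v \<in> Vg N"
  shows "degree (Eg k N) v = k + 1"
  unfolding degree_def inc_set[OF N v] using card_image[OF inc_inj[OF N v]] by simp

lemma deg_out:
  assumes "v \<notin> Vg N"
  shows "degree (Eg k N) v = 0"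
proof -
  have "{e \<in> Eg k N. v \<in> e} = {}" using inc_all[of _ k N v] assms by blast
  then show ?thesis unfolding degree_def by (metis card.empty)
qed

lemma Eg_sub:
  assumes "e \<in> Eg k N"
  shows "\<exists>a b. e = {a, b} \<and> even a \<and> odd b \<and> a \<in> Vg N \<and> b \<in> Vg N"
proof -
  obtain c s where e': "e = {2*s, 2*(sg k N c - s)+1}" and w: "1 \<le> c" "c \<le> N + k" "max 1 (c-k) \<le> s" "s \<le> min N c"
    using assms unfolding Eg_def by blast
  have "2*s \<in> e" "2*(sg k N c - s)+1 \<in> e" using e' by auto
  then have "2*s \<in> Vg N" "2*(sg k N c - s)+1 \<in> Vg N" using inc_all[OF assms] by blast+
  moreover have "even (2*s)" "odd (2*(sg k N c - s)+1)" by auto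
  ultimately show ?thesis using e' by blast
qed

lemma interval_col:
  assumes N: "k + 1 \<le> N"
  shows "interval_coloring (Vg N) (Eg k N) (N + k) (colg k N)"
  unfolding interval_coloring_def
proof (intro conjI ballI allI impI)
  fix e assume e: "e \<in> Eg k N"
  then obtain c s where e': "e = {2*s, 2*(sg k N c - s)+1}" and w: "1 \<le> c" "c \<le> N + k" "max 1 (c-k) \<le> s" "s \<le> min N c"
    unfolding Eg_def by blast
  show "colg k N e \<in> {1..N+k}" using colg_edge[OF N w] e' w by simp
next
  fix i assume i: "i \<in> {1..N+k}"
  define s where "s = max 1 (i - k)"
  have w: "1 \<le> i" "i \<le> N + k" "max 1 (i-k) \<le> s" "s \<le> min N i" using i N unfolding s_def by auto
  have "{2*s, 2*(sg k N i - s)+1} \<in> Eg k N" unfolding Eg_def using w by blast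
  then show "\<exists>e\<in>Eg k N. colg k N e = i" using colg_edge[OF N w] by blast
next
  fix e e' assume e: "e \<in> Eg k N" and e': "e' \<in> Eg k N" and ne: "e \<noteq> e' \<and> e \<inter> e' \<noteq> {}"
  then obtain v where v: "v \<in> e" "v \<in> e'" by blast
  from inc_all[OF e v(1)] obtain c where vV: "v \<in> Vg N" and c: "v div 2 \<le> c" "c \<le> v div 2 + k" "e = inc k N v c" by blast
  from inc_all[OF e' v(2)] obtain c' where c': "v div 2 \<le> c'" "c' \<le> v div 2 + k" "e' = inc k N v c'" by blast
  have "colg k N e = c" "colg k N e' = c'" using inc_in[OF N vV] c c' by auto
  moreover have "c \<noteq> c'" using c c' ne by auto
  ultimately show "colg k N e \<noteq> colg k N e'" by simp
next
  fix v i j l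
  assume v: "v \<in> Vg N" and h: "i \<le> j \<and> j \<le> l \<and> i \<in> colg k N ` {e \<in> Eg k N. v \<in> e} \<and> l \<in> colg k N ` {e \<in> Eg k N. v \<in> e}"
  then show "j \<in> colg k N ` {e \<in> Eg k N. v \<in> e}" unfolding col_set[OF N v] by auto
qed

lemma walk_snoc:
  assumes w: "is_walk V E xs" and e: "{last xs, y} \<in> E" and y: "y \<in> V"
  shows "is_walk V E (xs @ [y])"
  unfolding is_walk_def
proof (intro conjI allI impI)
  show "xs @ [y] \<noteq> []" by simp
  show "set (xs @ [y]) \<subseteq> V" using w y unfolding is_walk_def by auto
  fix i assume i: "Suc i < length (xs @ [y])"
  show "{(xs @ [y]) ! i, (xs @ [y]) ! Suc i} \<in> E"
  proof (cases "Suc i < length xs")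
    case True
    then show ?thesis using w unfolding is_walk_def by (simp add: nth_append)
  next
    case False
    with i have ii: "Suc i = length xs" by simp
    have ne: "xs \<noteq> []" using w unfolding is_walk_def by simp
    have "i = length xs - 1" using ii by simp
    then have "(xs @ [y]) ! i = last xs" using ii ne by (simp add: nth_append last_conv_nth)
    moreover have "(xs @ [y]) ! Suc i = y" using ii by (simp add: nth_append)
    ultimately show ?thesis using e by simp
  qed
qed

lemma adjK_sym: "adjK N K x y = adjK N K y x"
  by (auto simp: adjK_def add.commute)

lemma adj_edge:
  assumes k: "1 \<le> k" "k+1 \<le> N" and a: "adjK N k x y"
  shows "{2*x, 2*y+1} \<in> Eg k N"
proof -
  have b: "1 \<le> x" "1 \<le> y" "x \<le> N" "y \<le> N" "x \<le> y + k" "y \<le> x + k"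
    and cnd: "x+y \<le> k+2 \<or> 2*N \<le> x+y+k \<or> even (x+y+k)" using a by (auto simp: adjK_def)
  have "\<exists>c. 1 \<le> c \<and> c \<le> N+k \<and> max 1 (c-k) \<le> x \<and> x \<le> min N c \<and> sg k N c = x + y"
  proof (cases "x+y \<le> k+2")
    case True
    define c where "c = x+y-1"
    have c1: "c \<le> k+1" "c \<le> N" "1 \<le> c" "x \<le> c" "x + y = 1 + c" using True b k unfolding c_def by linarith+
    have "max 1 (c-k) = 1" "min N c = c" using c1 by auto
    then show ?thesis using c1 b k unfolding sg_def by (intro exI[of _ c]) simp
  next
    case F1: False
    show ?thesis
    proof (cases "2*N \<le> x+y+k")
      case True
      define c where "c = x+y+k-N"
      have c1: "k+1 \<le> c" "N \<le> c" "c - k + N = x + y" "c - k \<le> x" "c \<le> N + k" using True b k unfolding c_def by linarith+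
      have "max 1 (c-k) = c - k" "min N c = N" using c1 by auto
      then show ?thesis using c1 b k unfolding sg_def by (intro exI[of _ c]) simp
    next
      case F2: False
      with F1 cnd have "even (x+y+k)" by auto
      then obtain m where m: "x+y+k = 2*m" by (blast elim: evenE)
      have c1: "k+1 \<le> m" "m \<le> N" "m - k + m = x + y" "m - k \<le> x" "x \<le> m" using F1 F2 m b k by linarith+
      have "max 1 (m-k) = m - k" "min N m = m" using c1 by auto
      then show ?thesis using c1 b k unfolding sg_def by (intro exI[of _ m]) simp
    qed
  qed
  then obtain c where c: "1 \<le> c" "c \<le> N+k" "max 1 (c-k) \<le> x" "x \<le> min N c" "sg k N c = x + y" by blast
  then have "{2*x, 2*y+1} = {2*x, 2*(sg k N c - x)+1}" by simp
  then show ?thesis unfolding Eg_def using c by blast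
qed

lemma walks_j:
  assumes k: "1 \<le> k" "k+1 \<le> N" and b: "b \<le> 1"
  shows "adjK N (j*k) x z \<Longrightarrow> \<exists>xs. is_walk (Vg N) (Eg k N) xs \<and> hd xs = 2*x+b \<and>
            last xs = 2*z + (b+j) mod 2 \<and> length xs = Suc j"
proof (induction j arbitrary: z)
  case 0
  then have xz: "x = z" "1 \<le> x" "x \<le> N" by (auto simp: adjK_def)
  have "is_walk (Vg N) (Eg k N) [2*x+b]" unfolding is_walk_def Vg_def using xz b by auto
  then show ?case using xz b by (intro exI[of _ "[2*x+b]"]) auto
next
  case (Suc j)
  have "adjK N (j*k + k) x z" using Suc.prems by (simp add: add.commute)
  from adjK_comp[OF k(1) this] obtain y where y: "adjK N (j*k) x y" "adjK N k y z" by blast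
  from Suc.IH[OF y(1)] obtain xs where xs: "is_walk (Vg N) (Eg k N) xs" "hd xs = 2*x+b"
    "last xs = 2*y + (b+j) mod 2" "length xs = Suc j" by blast
  define w where "w = 2*z + (b + Suc j) mod 2"
  have z: "1 \<le> z" "z \<le> N" using y(2) by (auto simp: adjK_def)
  have wV: "w \<in> Vg N" using z unfolding w_def Vg_def by auto
  have "{last xs, w} \<in> Eg k N"
  proof (cases "(b+j) mod 2 = 0")
    case True
    then have "w = 2*z+1" unfolding w_def by presburger
    then show ?thesis using xs(3) True adj_edge[OF k y(2)] by simp
  next
    case False
    then have "(b+j) mod 2 = 1" by presburger
    moreover have "w = 2*z" unfolding w_def using False by presburger
    ultimately have "{last xs, w} = {2*z, 2*y+1}" using xs(3) by auto
    then show ?thesis using adj_edge[OF k, of z y] y(2) adjK_sym by metis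
  qed
  from walk_snoc[OF xs(1) this wV] have "is_walk (Vg N) (Eg k N) (xs @ [w])" .
  moreover have "xs \<noteq> []" using xs(4) by auto
  moreover have "hd (xs @ [w]) = 2*x+b" using \<open>xs \<noteq> []\<close> xs(2) by simp
  moreover have "last (xs @ [w]) = 2*z + (b + Suc j) mod 2" unfolding w_def by simp
  moreover have "length (xs @ [w]) = Suc (Suc j)" using xs(4) by simp
  ultimately show ?case by blast
qed

lemma adj_big:
  assumes "N \<le> K + 1" "1 \<le> x" "x \<le> N" "1 \<le> z" "z \<le> N"
  shows "adjK N K x z"
  using assms unfolding adjK_def by auto

lemma Suc_mod2_ne: "Suc n mod 2 \<noteq> n mod (2::nat)"
  by presburger

lemma all_walks:
  assumes k: "1 \<le> k" and d: "2 \<le> d" and N: "N = (d-1)*k+1" and u: "u \<in> Vg N" and v: "v \<in> Vg N"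
  shows "\<exists>xs. is_walk (Vg N) (Eg k N) xs \<and> hd xs = u \<and> last xs = v \<and> length xs \<le> Suc d"
proof -
  have "1*k \<le> (d-1)*k" using d by (intro mult_le_mono1) simp
  then have kN: "k + 1 \<le> N" using N by simp
  define x where "x = u div 2"
  define b where "b = u mod 2"
  define z where "z = v div 2"
  define b' where "b' = v mod 2"
  have b1: "b \<le> 1" "b' < 2" unfolding b_def b'_def by auto
  define j where "j = (if (b + (d-1)) mod 2 = b' then d-1 else d)"
  have bj: "(b + j) mod 2 = b'"
  proof (cases "(b + (d-1)) mod 2 = b'")
    case True then show ?thesis unfolding j_def by simp
  next
    case False
    have e: "b + d = Suc (b + (d-1))" using d by simp
    have "Suc (b + (d-1)) mod 2 \<noteq> (b + (d-1)) mod 2" by (rule Suc_mod2_ne)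
    then have "(b + d) mod 2 \<noteq> (b + (d-1)) mod 2" unfolding e .
    moreover have "(b + d) mod 2 < 2" "(b + (d-1)) mod 2 < 2" by auto
    ultimately have "(b + d) mod 2 = b'" using False b1 by linarith
    then show ?thesis unfolding j_def using False by simp
  qed
  have jd: "d - 1 \<le> j" "j \<le> d" unfolding j_def by auto
  have "(d-1)*k \<le> j*k" using jd(1) by (rule mult_le_mono1)
  then have NK: "N \<le> j*k + 1" using N by linarith
  have xz: "1 \<le> x" "x \<le> N" "1 \<le> z" "z \<le> N" using u v unfolding Vg_def x_def z_def by auto
  have "adjK N (j*k) x z" using adj_big[OF NK xz] .
  from walks_j[OF k kN b1(1) this] obtain xs where
    xs: "is_walk (Vg N) (Eg k N) xs" "hd xs = 2*x+b" "last xs = 2*z + (b+j) mod 2" "length xs = Suc j"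
    by blast
  have "2*x+b = u" "2*z + b' = v" unfolding x_def b_def z_def b'_def by simp_all
  then show ?thesis using xs bj jd by (intro exI[of _ xs]) auto
qed

lemma ic_surj: "interval_coloring V E t c \<Longrightarrow> i \<in> {1..t} \<Longrightarrow> \<exists>e\<in>E. c e = i"
  unfolding interval_coloring_def by (elim conjE) (rule bspec)

lemma ic_int:
  assumes "interval_coloring V E t c" "v \<in> V" "i \<le> j" "j \<le> k"
    "i \<in> c ` {e\<in>E. v \<in> e}" "k \<in> c ` {e\<in>E. v \<in> e}"
  shows "j \<in> c ` {e\<in>E. v \<in> e}"
proof -
  have iv: "\<forall>v\<in>V. \<forall>i j k. i \<le> j \<and> j \<le> k \<and> i \<in> c ` {e\<in>E. v \<in> e}
            \<and> k \<in> c ` {e\<in>E. v \<in> e} \<longrightarrow> j \<in> c ` {e\<in>E. v \<in> e}"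
    using assms(1) unfolding interval_coloring_def by (elim conjE)
  show ?thesis by (rule iv[rule_format, OF assms(2)]) (use assms in simp)
qed

lemma par_step:
  assumes "p mod 2 \<noteq> q mod 2" "q mod 2 = (h+i) mod 2"
  shows "p mod 2 = (h + Suc i) mod (2::nat)"
proof -
  have "Suc (h+i) mod 2 \<noteq> (h+i) mod 2" by (rule Suc_mod2_ne)
  moreover have "p mod 2 < 2" "q mod 2 < 2" "Suc (h+i) mod 2 < 2" by auto
  ultimately have "p mod 2 = Suc (h+i) mod 2" using assms by linarith
  then show ?thesis by simp
qed

lemma par_ne:
  assumes "{p, q} = {a, b}" "even a" "odd (b::nat)"
  shows "q mod 2 \<noteq> p mod 2"
proof -
  have "a mod 2 = 0" "b mod 2 = 1" using assms(2,3) by (simp_all add: even_iff_mod_2_eq_zero odd_iff_mod_2_eq_one)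
  moreover have "(p = a \<and> q = b) \<or> (p = b \<and> q = a)" using assms(1) by (simp add: doubleton_eq_iff)
  ultimately show ?thesis by auto
qed

lemma walk_parity:
  assumes par: "\<forall>e\<in>E. \<exists>a b. e = {a, b} \<and> even a \<and> odd (b::nat)"
    and w: "is_walk V E xs"
  shows "i < length xs \<Longrightarrow> xs ! i mod 2 = (hd xs + i) mod 2"
proof (induction i)
  case 0
  have "xs \<noteq> []" using w unfolding is_walk_def by simp
  then show ?case by (simp add: hd_conv_nth)
next
  case (Suc i)
  then have "{xs ! i, xs ! Suc i} \<in> E" using w unfolding is_walk_def by blast
  then obtain a b where ab: "{xs ! i, xs ! Suc i} = {a, b}" "even a" "odd b" using par by blast
  then have "xs ! Suc i mod 2 \<noteq> xs ! i mod 2" by (rule par_ne)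
  moreover have "xs ! i mod 2 = (hd xs + i) mod 2" using Suc by simp
  ultimately show ?case by (rule par_step)
qed

lemma col_step:
  assumes ic: "interval_coloring V E t c" and fin: "finite E" and deg: "degree E v \<le> Dg"
    and v: "v \<in> V" and e: "e \<in> E" "v \<in> e" and e': "e' \<in> E" "v \<in> e'"
  shows "c e' \<le> c e + (Dg - 1)"
proof (cases "c e' \<le> c e")
  case True then show ?thesis by simp
next
  case False
  let ?S = "c ` {e \<in> E. v \<in> e}"
  have sub: "{c e..c e'} \<subseteq> ?S"
  proof
    fix j assume "j \<in> {c e..c e'}"
    moreover have "c e \<in> ?S" "c e' \<in> ?S" using e e' by auto
    ultimately show "j \<in> ?S" using ic_int[OF ic v] by auto
  qed
  have "finite ?S" using fin by simp
  then have "card {c e..c e'} \<le> card ?S" using sub by (rule card_mono)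
  also have "\<dots> \<le> card {e \<in> E. v \<in> e}" by (rule card_image_le) (use fin in simp)
  also have "\<dots> \<le> Dg" using deg unfolding degree_def .
  finally have "c e' + 1 - c e \<le> Dg" by simp
  then show ?thesis using False by linarith
qed

lemma col_walk:
  assumes ic: "interval_coloring V E t c" and fin: "finite E" and deg: "\<And>v. degree E v \<le> Dg"
    and w: "is_walk V E xs" and e0: "e0 \<in> E" "hd xs \<in> e0"
  shows "i < length xs \<Longrightarrow> e' \<in> E \<Longrightarrow> xs ! i \<in> e' \<Longrightarrow> c e' \<le> c e0 + (i+1)*(Dg-1)"
proof (induction i arbitrary: e')
  case 0
  have ne: "xs \<noteq> []" using w unfolding is_walk_def by simp
  have "hd xs \<in> V" using w ne unfolding is_walk_def by (auto simp: hd_in_set subset_iff)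
  moreover have "xs ! 0 = hd xs" using ne by (simp add: hd_conv_nth)
  ultimately show ?case using col_step[OF ic fin deg _ e0 0(2)] 0(3) by simp
next
  case (Suc i)
  let ?f = "{xs ! i, xs ! Suc i}"
  have f: "?f \<in> E" using w Suc(2) unfolding is_walk_def by blast
  have "c ?f \<le> c e0 + (i+1)*(Dg-1)" using Suc.IH[OF _ f] Suc(2) by simp
  moreover have "xs ! Suc i \<in> V" using w Suc(2) unfolding is_walk_def by (auto simp: subset_iff)
  then have "c e' \<le> c ?f + (Dg - 1)" using col_step[OF ic fin deg _ f _ Suc(3,4)] by simp
  ultimately show ?case by simp
qed

lemma bound:
  assumes fin: "finite E"
    and par: "\<forall>e\<in>E. \<exists>a b. e = {a, b} \<and> even a \<and> odd (b::nat)"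
    and sub: "\<forall>e\<in>E. e \<subseteq> V"
    and deg: "\<And>v. degree E v \<le> Dg"
    and walks: "\<forall>u\<in>V. \<forall>v\<in>V. \<exists>xs. is_walk V E xs \<and> hd xs = u \<and> last xs = v \<and> length xs \<le> Suc D"
    and ic: "interval_coloring V E t c" and t1: "1 \<le> t"
  shows "t \<le> D*(Dg-1)+1"
proof -
  from ic_surj[OF ic, of 1] t1 obtain e1 where e1: "e1 \<in> E" "c e1 = 1" by auto
  from ic_surj[OF ic, of t] t1 obtain e2 where e2: "e2 \<in> E" "c e2 = t" by auto
  from par e1 obtain a a' where a: "e1 = {a, a'}" by blast
  from par e2 obtain p q where pq: "e2 = {p, q}" "even p" "odd q" by blast
  have aV: "a \<in> V" using sub e1 a by auto
  have pV: "p \<in> V" "q \<in> V" using sub e2 pq by auto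
  obtain xs1 where x1: "is_walk V E xs1" "hd xs1 = a" "last xs1 = p" "length xs1 \<le> Suc D"
    using walks aV pV by blast
  obtain xs2 where x2: "is_walk V E xs2" "hd xs2 = a" "last xs2 = q" "length xs2 \<le> Suc D"
    using walks aV pV by blast
  have ne1: "xs1 \<noteq> []" and ne2: "xs2 \<noteq> []" using x1 x2 unfolding is_walk_def by auto
  have "p mod 2 = (a + (length xs1 - 1)) mod 2"
    using walk_parity[OF par x1(1), of "length xs1 - 1"] ne1 x1 by (simp add: last_conv_nth)
  moreover have "q mod 2 = (a + (length xs2 - 1)) mod 2"
    using walk_parity[OF par x2(1), of "length xs2 - 1"] ne2 x2 by (simp add: last_conv_nth)
  ultimately have "length xs1 \<noteq> length xs2" using pq by auto
  then obtain xs where xs: "is_walk V E xs" "hd xs = a" "last xs \<in> e2" "length xs \<le> D"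
    using x1 x2 pq by (metis insertI1 insertI2 le_Suc_eq)
  have ne: "xs \<noteq> []" using xs unfolding is_walk_def by auto
  have "c e2 \<le> c e1 + (length xs - 1 + 1)*(Dg-1)"
    using col_walk[OF ic fin deg xs(1) e1(1), of "length xs - 1" e2] xs ne a e2(1)
    by (simp add: last_conv_nth)
  also have "\<dots> \<le> 1 + D*(Dg-1)" using e1(2) ne xs(4) by simp
  finally show ?thesis using e2 by simp
qed

theorem theorem6:
  fixes d \<Delta> :: nat
  assumes "d \<ge> 2" and "\<Delta> \<ge> 2"
  shows "\<exists>(V :: nat set) E. simple_graph V E \<and> connected_graph V E \<and> bipartite V E \<and>
           diam V E = d \<and> max_degree V E = \<Delta> \<and>
           interval_colorable V E \<and> W V E = d * (\<Delta> - 1) + 1"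
proof -
  define k where "k = \<Delta> - 1"
  define N where "N = (d-1)*k+1"
  have k1: "1 \<le> k" using assms(2) unfolding k_def by simp
  have "1*k \<le> (d-1)*k" using assms(1) by (intro mult_le_mono1) simp
  then have kN: "k + 1 \<le> N" unfolding N_def by simp
  have T: "N + k = d * (\<Delta> - 1) + 1"
  proof -
    have "d = Suc (d-1)" using assms(1) by simp
    then have "d * k = (d-1)*k + k" by (metis mult_Suc add.commute)
    then show ?thesis unfolding N_def k_def[symmetric] by simp
  qed
  have Dk: "\<Delta> = k + 1" unfolding k_def using assms(2) by simp
  let ?V = "Vg N" and ?E = "Eg k N"
  have finV: "finite ?V" unfolding Vg_def by simp
  have esub: "\<forall>e\<in>?E. \<exists>a b. e = {a, b} \<and> even a \<and> odd b \<and> a \<in> ?V \<and> b \<in> ?V"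
    by (intro ballI) (rule Eg_sub)
  have par: "\<forall>e\<in>?E. \<exists>a b. e = {a, b} \<and> even a \<and> odd (b::nat)"
  proof
    fix e assume "e \<in> ?E"
    from Eg_sub[OF this] obtain a b where "e = {a, b}" "even a" "odd b" by blast
    then show "\<exists>a b. e = {a, b} \<and> even a \<and> odd (b::nat)" by blast
  qed
  have sub: "\<forall>e\<in>?E. e \<subseteq> ?V"
  proof
    fix e assume "e \<in> ?E"
    from Eg_sub[OF this] obtain a b where "e = {a, b}" "a \<in> ?V" "b \<in> ?V" by blast
    then show "e \<subseteq> ?V" by simp
  qed
  have finE: "finite ?E"
  proof (rule finite_subset)
    show "?E \<subseteq> Pow ?V" using sub by blast
    show "finite (Pow ?V)" using finV by simp
  qed
  have deg: "\<And>v. degree ?E v \<le> \<Delta>"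
    using deg_eq[OF kN] deg_out Dk by (metis le_refl zero_le)
  have walks: "\<forall>u\<in>?V. \<forall>v\<in>?V. \<exists>xs. is_walk ?V ?E xs \<and> hd xs = u \<and> last xs = v \<and> length xs \<le> Suc d"
    using all_walks[OF k1 assms(1) N_def] by blast
  have ic: "interval_coloring ?V ?E (N+k) (colg k N)" by (rule interval_col[OF kN])
  have hic: "has_interval_coloring ?V ?E (N+k)" unfolding has_interval_coloring_def using ic kN by auto
  have bnd: "\<And>t. has_interval_coloring ?V ?E t \<Longrightarrow> t \<le> N + k"
  proof -
    fix t assume "has_interval_coloring ?V ?E t"
    then obtain c where "interval_coloring ?V ?E t c" "1 \<le> t" unfolding has_interval_coloring_def by auto
    from bound[OF finE par sub deg walks this] show "t \<le> N + k" using T by simp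
  qed
  have Wv: "W ?V ?E = N + k" unfolding W_def using hic bnd by (intro Greatest_equality) auto
  have V2: "2 \<in> ?V" using kN unfolding Vg_def by simp
  have simple: "simple_graph ?V ?E" unfolding simple_graph_def
  proof (intro conjI ballI)
    show "finite ?V" by (rule finV)
    fix e assume "e \<in> ?E"
    with esub obtain a b where "e = {a, b}" "even a" "odd b" "a \<in> ?V" "b \<in> ?V" by blast
    moreover have "a \<noteq> b" using \<open>even a\<close> \<open>odd b\<close> by auto
    ultimately show "\<exists>u v. e = {u, v} \<and> u \<noteq> v \<and> u \<in> ?V \<and> v \<in> ?V" by blast
  qed
  have conn: "connected_graph ?V ?E" unfolding connected_graph_def using V2 walks by blast
  have bip: "bipartite ?V ?E" unfolding bipartite_def
  proof (intro exI conjI)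
    show "{v \<in> ?V. even v} \<union> {v \<in> ?V. odd v} = ?V" by auto
    show "{v \<in> ?V. even v} \<inter> {v \<in> ?V. odd v} = {}" by auto
    show "\<forall>e\<in>?E. \<exists>a\<in>{v \<in> ?V. even v}. \<exists>b\<in>{v \<in> ?V. odd v}. e = {a, b}" using esub by blast
  qed
  have md: "max_degree ?V ?E = \<Delta>"
  proof -
    have "degree ?E ` ?V = {\<Delta>}" using deg_eq[OF kN] Dk V2 by auto
    then show ?thesis unfolding max_degree_def by simp
  qed
  define S where "S = {graph_dist ?V ?E u v | u v. u \<in> ?V \<and> v \<in> ?V}"
  have dist_le: "\<And>u v. u \<in> ?V \<Longrightarrow> v \<in> ?V \<Longrightarrow> graph_dist ?V ?E u v \<le> d"
  proof -
    fix u v assume "u \<in> ?V" "v \<in> ?V"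
    then obtain xs where xs: "is_walk ?V ?E xs" "hd xs = u" "last xs = v" "length xs \<le> Suc d"
      using walks by blast
    then have ne: "xs \<noteq> []" unfolding is_walk_def by simp
    then have "length xs = Suc (length xs - 1)" by simp
    then have "graph_dist ?V ?E u v \<le> length xs - 1"
      unfolding graph_dist_def using xs by (intro Least_le) blast
    then show "graph_dist ?V ?E u v \<le> d" using xs(4) by simp
  qed
  have Sfin: "finite S" 
  proof (rule finite_subset)
    show "S \<subseteq> {0..d}" unfolding S_def using dist_le by auto
  qed simp
  have Sne: "S \<noteq> {}" unfolding S_def using V2 by blast
  have dmax: "Max S \<le> d" using Sfin Sne dist_le unfolding S_def by (auto simp: Max_le_iff)
  have dmin: "d \<le> Max S"
  proof (rule ccontr)
    assume "\<not> d \<le> Max S"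
    then have lt: "\<And>u v. u \<in> ?V \<Longrightarrow> v \<in> ?V \<Longrightarrow> graph_dist ?V ?E u v \<le> d - 1"
      using Max_ge[OF Sfin] unfolding S_def by fastforce
    have walks': "\<forall>u\<in>?V. \<forall>v\<in>?V. \<exists>xs. is_walk ?V ?E xs \<and> hd xs = u \<and> last xs = v \<and> length xs \<le> Suc (d-1)"
    proof (intro ballI)
      fix u v assume uv: "u \<in> ?V" "v \<in> ?V"
      have ex: "\<exists>n xs. is_walk ?V ?E xs \<and> hd xs = u \<and> last xs = v \<and> length xs = Suc n"
        using walks uv by (metis Suc_pred is_walk_def length_greater_0_conv)
      have "\<exists>xs. is_walk ?V ?E xs \<and> hd xs = u \<and> last xs = v \<and> length xs = Suc (graph_dist ?V ?E u v)"
        unfolding graph_dist_def by (rule LeastI_ex) (use ex in blast)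
      then show "\<exists>xs. is_walk ?V ?E xs \<and> hd xs = u \<and> last xs = v \<and> length xs \<le> Suc (d-1)"
        using lt[OF uv] by fastforce
    qed
    from bound[OF finE par sub deg walks' ic] have "N + k \<le> (d-1)*(\<Delta>-1)+1" using kN by simp
    then show False using k1 unfolding N_def k_def by simp
  qed
  have dd: "diam ?V ?E = d" unfolding diam_def S_def[symmetric] using dmax dmin by simp
  have icol: "interval_colorable ?V ?E" unfolding interval_colorable_def using hic by blast
  show ?thesis
    by (rule exI[of _ ?V], rule exI[of _ ?E]) (use simple conn bip dd md icol Wv T in simp)
qed

end
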